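(* Let $g(t)$, $t\in[0,T)$, be the maximal Ricci flow solution on $S^1\times S^3$ of the form $g(t)=\phi^2dz^2+a^2\omega^1\otimes\omega^1+b^2\omega^2\otimes\omega^2+c^2\omega^3\otimes\omega^3$ starting from initial data with $0<a\le b\le c$, and let $\hat c(t)=\max_s c(s,t)$. Then $\hat c(t)^2\le -4t+\hat c(0)^2$.
   Context: $S^3=SU(2)$ carries a global left-invariant frame $E_1,E_2,E_3$ with $[E_i,E_j]=-2\epsilon_{ijk}E_k$ and dual coframe $\omega^i$; $z\in S^1=[0,2\pi)$, $\phi,a,b,c$ positive smooth $2\pi$-periodic functions; $s$ is the arclength coordinate $ds=\phi\,dz$. The Ricci flow $\partial_tg=-2\mathrm{Ric}(g)$ preserves this form. *)

theory Defs
  imports "HOL-Analysis.Analysis"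
begin

text \<open>Functions of (z,t) with z the S^1 coordinate (lifted to the real line, 2pi-periodic)
  and t the time.  This says that all
  iterated partial derivatives exist and are continuous, i.e. the function is C-infinity.\<close>

definition smooth_zt :: "real \<Rightarrow> (real \<Rightarrow> real \<Rightarrow> real) \<Rightarrow> bool" where
  "smooth_zt T f \<longleftrightarrow> (\<exists>F :: (real \<Rightarrow> real \<Rightarrow> real) set. f \<in> F \<and>
     (\<forall>g\<in>F. continuous_on (UNIV \<times> {0..<T}) (\<lambda>(z,t). g z t) \<and>
        (\<exists>gz\<in>F. \<forall>z. \<forall>t\<in>{0..<T}. ((\<lambda>y. g y t) has_real_derivative gz z t) (at z)) \<and>
        (\<exists>gt\<in>F. \<forall>z. \<forall>t\<in>{0..<T}.
            ((\<lambda>s. g z s) has_real_derivative gt z t) (at t within {0..<T}))))"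

definition dz :: "(real \<Rightarrow> real \<Rightarrow> real) \<Rightarrow> real \<Rightarrow> real \<Rightarrow> real" where
  "dz f z t = deriv (\<lambda>y. f y t) z"

definition dt :: "(real \<Rightarrow> real \<Rightarrow> real) \<Rightarrow> real \<Rightarrow> real \<Rightarrow> real" where
  "dt f z t = deriv (\<lambda>s. f z s) t"

definition ds :: "(real \<Rightarrow> real \<Rightarrow> real) \<Rightarrow> (real \<Rightarrow> real \<Rightarrow> real) \<Rightarrow> real \<Rightarrow> real \<Rightarrow> real" where
  "ds \<phi> f z t = dz f z t / \<phi> z t"

text \<open>Ricci flow of g = phi^2 dz^2 + a^2 w1^2 + b^2 w2^2 + c^2 w3^2 on S^1 x S^3,
  with [E_i,E_j] = -2 eps_ijk E_k, written componentwise (dg/dt = -2 Ric(g)):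
   phi_t = phi (a_ss/a + b_ss/b + c_ss/c),
   a_t = a_ss + a_s (b_s/b + c_s/c) - 2 (a^4 - (b^2-c^2)^2)/(a b^2 c^2), and cyclically.\<close>
definition bianchi_rf :: "real \<Rightarrow> (real \<Rightarrow> real \<Rightarrow> real) \<Rightarrow> (real \<Rightarrow> real \<Rightarrow> real) \<Rightarrow>
    (real \<Rightarrow> real \<Rightarrow> real) \<Rightarrow> (real \<Rightarrow> real \<Rightarrow> real) \<Rightarrow> bool" where
  "bianchi_rf T \<phi> a b c \<longleftrightarrow> 0 < T \<and>
     smooth_zt T \<phi> \<and> smooth_zt T a \<and> smooth_zt T b \<and> smooth_zt T c \<and>
     (\<forall>z. \<forall>t\<in>{0..<T}. 0 < \<phi> z t \<and> 0 < a z t \<and> 0 < b z t \<and> 0 < c z t) \<and>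
     (\<forall>z. \<forall>t\<in>{0..<T}. \<phi> (z + 2*pi) t = \<phi> z t \<and> a (z + 2*pi) t = a z t \<and>
                        b (z + 2*pi) t = b z t \<and> c (z + 2*pi) t = c z t) \<and>
     (\<forall>z. \<forall>t\<in>{0<..<T}.
        dt \<phi> z t = \<phi> z t * (ds \<phi> (ds \<phi> a) z t / a z t + ds \<phi> (ds \<phi> b) z t / b z t
                               + ds \<phi> (ds \<phi> c) z t / c z t) \<and>
        dt a z t = ds \<phi> (ds \<phi> a) z t
                   + ds \<phi> a z t * (ds \<phi> b z t / b z t + ds \<phi> c z t / c z t)
                   - 2 * ((a z t)^4 - ((b z t)^2 - (c z t)^2)^2) / (a z t * (b z t)^2 * (c z t)^2) \<and>
        dt b z t = ds \<phi> (ds \<phi> b) z t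
                   + ds \<phi> b z t * (ds \<phi> a z t / a z t + ds \<phi> c z t / c z t)
                   - 2 * ((b z t)^4 - ((a z t)^2 - (c z t)^2)^2) / (b z t * (a z t)^2 * (c z t)^2) \<and>
        dt c z t = ds \<phi> (ds \<phi> c) z t
                   + ds \<phi> c z t * (ds \<phi> a z t / a z t + ds \<phi> b z t / b z t)
                   - 2 * ((c z t)^4 - ((a z t)^2 - (b z t)^2)^2) / (c z t * (a z t)^2 * (b z t)^2))"

definition chat :: "(real \<Rightarrow> real \<Rightarrow> real) \<Rightarrow> real \<Rightarrow> real" where
  "chat c t = Sup ((\<lambda>z. c z t) ` {0..2*pi})"

end

theory Submission
  imports Defs
begin

lemma smooth_ders:
  assumes "smooth_zt T f"
  shows "\<exists>f1 f2 ft. continuous_on (UNIV \<times> {0..<T}) (\<lambda>(z,t). f z t) \<and>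
    (\<forall>z. \<forall>t\<in>{0..<T}. ((\<lambda>y. f y t) has_real_derivative f1 z t) (at z)) \<and>
    (\<forall>z. \<forall>t\<in>{0..<T}. ((\<lambda>y. f1 y t) has_real_derivative f2 z t) (at z)) \<and>
    (\<forall>z. \<forall>t\<in>{0..<T}. ((\<lambda>s. f z s) has_real_derivative ft z t) (at t within {0..<T}))"
proof -
  obtain F where F: "f \<in> F" "\<forall>g\<in>F. continuous_on (UNIV \<times> {0..<T}) (\<lambda>(z,t). g z t) \<and>
        (\<exists>gz\<in>F. \<forall>z. \<forall>t\<in>{0..<T}. ((\<lambda>y. g y t) has_real_derivative gz z t) (at z)) \<and>
        (\<exists>gt\<in>F. \<forall>z. \<forall>t\<in>{0..<T}.
            ((\<lambda>s. g z s) has_real_derivative gt z t) (at t within {0..<T}))"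
    using assms unfolding smooth_zt_def by blast
  then obtain f1 ft where f1: "f1 \<in> F" "\<forall>z. \<forall>t\<in>{0..<T}. ((\<lambda>y. f y t) has_real_derivative f1 z t) (at z)"
    and ft: "\<forall>z. \<forall>t\<in>{0..<T}. ((\<lambda>s. f z s) has_real_derivative ft z t) (at t within {0..<T})"
    by blast
  then obtain f2 where "\<forall>z. \<forall>t\<in>{0..<T}. ((\<lambda>y. f1 y t) has_real_derivative f2 z t) (at z)"
    using F by blast
  then show ?thesis using f1 ft F by blast
qed

lemma dt_at:
  assumes "((\<lambda>s. f z s) has_real_derivative D) (at t within {0..<T})" "0 < t" "t < T"
  shows "((\<lambda>s. f z s) has_real_derivative D) (at t)"
proof -
  have "((\<lambda>s. f z s) has_real_derivative D) (at t within {0<..<T})"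
    by (rule has_field_derivative_subset[OF assms(1)]) auto
  moreover have "at t within {0<..<T} = at t" using assms by (intro at_within_open) auto
  ultimately show ?thesis by simp
qed

lemma slice_cont:
  assumes "continuous_on (UNIV \<times> {0..<T}) (\<lambda>(z,t). h z t)" "t \<in> {0..<T}"
  shows "continuous_on S (\<lambda>z. h z t)"
proof -
  have "continuous_on S (\<lambda>z. (\<lambda>(z,t). h z t) (z, t))"
    by (rule continuous_on_compose2[OF assms(1)]) (use assms(2) in \<open>auto intro!: continuous_intros\<close>)
  then show ?thesis by simp
qed

lemma first_time:
  fixes h :: "real \<Rightarrow> real \<Rightarrow> real"
  assumes cont: "continuous_on (UNIV \<times> {0..<T}) (\<lambda>(z,t). h z t)"
    and h0: "\<forall>z\<in>{0..2*pi}. h z 0 < 0"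
    and z1: "z1 \<in> {0..2*pi}" and t1: "t1 \<in> {0..<T}" and h1: "h z1 t1 \<ge> 0"
  shows "\<exists>t0 z0. 0 < t0 \<and> t0 < T \<and> z0 \<in> {0..2*pi} \<and> h z0 t0 \<ge> 0 \<and>
     (\<forall>z\<in>{0..2*pi}. h z t0 \<le> h z0 t0) \<and> (\<forall>t\<in>{0..<t0}. \<forall>z\<in>{0..2*pi}. h z t < 0)"
proof -
  define B where "B = {0..2*pi} \<times> {0..t1}"
  define K where "K = B \<inter> (\<lambda>(z,t). h z t) -` {0..}"
  have cB: "continuous_on B (\<lambda>(z,t). h z t)"
    by (rule continuous_on_subset[OF cont]) (use t1 in \<open>auto simp: B_def\<close>)
  have "compact B" unfolding B_def by (intro compact_Times compact_Icc)
  moreover have "closed K" unfolding K_def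
    by (rule continuous_closed_preimage[OF cB]) (simp_all add: B_def closed_Times)
  ultimately have "compact (B \<inter> K)" by (rule compact_Int_closed)
  moreover have "B \<inter> K = K" by (auto simp: K_def)
  ultimately have "compact K" by simp
  hence cK: "compact (snd ` K)" by (intro compact_continuous_image continuous_intros)
  have "(z1,t1) \<in> K" using z1 t1 h1 by (auto simp: K_def B_def)
  hence "snd ` K \<noteq> {}" by auto
  from compact_attains_inf[OF cK this] obtain t0 where t0: "t0 \<in> snd ` K" "\<forall>t\<in>snd ` K. t0 \<le> t"
    by blast
  then obtain zK where zK: "(zK,t0) \<in> K" by force
  hence zKB: "zK \<in> {0..2*pi}" "0 \<le> t0" "t0 \<le> t1" "h zK t0 \<ge> 0" by (auto simp: K_def B_def)
  have t0pos: "0 < t0"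
  proof (rule ccontr)
    assume "\<not> 0 < t0" hence "t0 = 0" using zKB by auto
    thus False using h0 zKB by force
  qed
  have t0T: "t0 < T" using zKB t1 by auto
  have before: "\<forall>t\<in>{0..<t0}. \<forall>z\<in>{0..2*pi}. h z t < 0"
  proof (intro ballI)
    fix t z assume t: "t \<in> {0..<t0}" and z: "z \<in> {0..2*pi}"
    show "h z t < 0"
    proof (rule ccontr)
      assume "\<not> h z t < 0"
      hence "(z,t) \<in> K" using t z zKB by (auto simp: K_def B_def)
      hence "t0 \<le> t" using t0 by force
      thus False using t by auto
    qed
  qed
  have "continuous_on {0..2*pi} (\<lambda>z. h z t0)"
    by (rule slice_cont[OF cont]) (use zKB t0T in auto)
  from continuous_attains_sup[OF compact_Icc _ this] obtain z0 where
    z0: "z0 \<in> {0..2*pi}" "\<forall>y\<in>{0..2*pi}. h y t0 \<le> h z0 t0" by auto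
  have "h zK t0 \<le> h z0 t0" using z0 zKB(1) by blast
  hence "h z0 t0 \<ge> 0" using zKB(4) by linarith
  thus ?thesis using t0pos t0T z0 before by blast
qed

lemma local_max_ders:
  fixes g gd :: "real \<Rightarrow> real" and gdd :: real
  assumes per: "\<forall>z. g (z + 2*pi) = g z"
    and z0: "z0 \<in> {0..2*pi}" and mx: "\<forall>z\<in>{0..2*pi}. g z \<le> g z0"
    and d1: "\<forall>z. (g has_real_derivative gd z) (at z)"
    and d2: "(gd has_real_derivative gdd) (at z0)"
  shows "gd z0 = 0 \<and> gdd \<le> 0"
proof -
  have loc: "\<forall>y. \<bar>z0 - y\<bar> < 2*pi \<longrightarrow> g y \<le> g z0"
  proof (intro allI impI)
    fix y assume y: "\<bar>z0 - y\<bar> < 2*pi"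
    consider "y < 0" | "y \<in> {0..2*pi}" | "y > 2*pi" by force
    then show "g y \<le> g z0"
    proof cases
      case 1
      hence "y + 2*pi \<in> {0..2*pi}" using y z0 by auto
      thus ?thesis using mx per by metis
    next
      case 2 thus ?thesis using mx by blast
    next
      case 3
      hence "y - 2*pi \<in> {0..2*pi}" using y z0 by auto
      moreover have "g y = g (y - 2*pi)" using per[rule_format, of "y - 2*pi"] by simp
      ultimately show ?thesis using mx by metis
    qed
  qed
  have g10: "gd z0 = 0" by (rule DERIV_local_max[OF d1[rule_format] _ loc]) simp
  have "gdd \<le> 0"
  proof (rule ccontr)
    assume "\<not> gdd \<le> 0" hence "0 < gdd" by simp
    from DERIV_pos_inc_right[OF d2 this] obtain d where d: "d > 0"
      "\<forall>h>0. h < d \<longrightarrow> gd z0 < gd (z0 + h)" by blast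
    define h where "h = min (d/2) pi"
    have h: "0 < h" "h < d" "h < 2*pi" using d pi_gt_zero unfolding h_def by (auto simp: min_def)
    obtain \<xi> where xi: "z0 < \<xi>" "\<xi> < z0 + h" "g (z0 + h) - g z0 = (z0 + h - z0) * gd \<xi>"
      using MVT2[of z0 "z0 + h" g gd] h d1 by auto
    have "gd \<xi> > 0" using d(2)[rule_format, of "\<xi> - z0"] xi h g10 by auto
    hence "h * gd \<xi> > 0" using h by simp
    hence "g (z0 + h) > g z0" using xi by simp
    moreover have "g (z0 + h) \<le> g z0" using loc h by auto
    ultimately show False by simp
  qed
  with g10 show ?thesis by simp
qed

lemma time_ders:
  fixes g :: "real \<Rightarrow> real"
  assumes "(g has_real_derivative l) (at t0)" "0 < t0" "g t0 \<ge> 0" "\<forall>t\<in>{0..<t0}. g t < 0"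
  shows "l \<ge> 0"
proof (rule ccontr)
  assume "\<not> l \<ge> 0" hence "l < 0" by simp
  from DERIV_neg_dec_left[OF assms(1) this] obtain d where d: "d > 0" "\<forall>h>0. h < d \<longrightarrow> g t0 < g (t0 - h)"
    by blast
  define h where "h = min (d/2) (t0/2)"
  have "g t0 < g (t0 - h)" using d unfolding h_def using assms(2) by auto
  moreover have "g (t0 - h) < 0" using assms(2,4) d unfolding h_def by auto
  ultimately show False using assms(3) by simp
qed

lemma ds_forms:
  assumes d1: "\<forall>y. ((\<lambda>y. f y t) has_real_derivative fd y t) (at y)"
    and d2: "\<forall>y. ((\<lambda>y. fd y t) has_real_derivative fdd y t) (at y)"
    and dp: "\<forall>y. ((\<lambda>y. \<phi> y t) has_real_derivative pd y t) (at y)"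
    and pos: "\<forall>y. \<phi> y t > 0"
  shows "ds \<phi> f z t = fd z t / \<phi> z t"
    "ds \<phi> (ds \<phi> f) z t = (fdd z t * \<phi> z t - fd z t * pd z t) / (\<phi> z t)^2 / \<phi> z t"
proof -
  have eq: "\<And>y. ds \<phi> f y t = fd y t / \<phi> y t"
    unfolding ds_def dz_def using DERIV_imp_deriv d1 by metis
  then show "ds \<phi> f z t = fd z t / \<phi> z t" .
  have fe: "(\<lambda>y. ds \<phi> f y t) = (\<lambda>y. fd y t / \<phi> y t)" using eq by auto
  have "((\<lambda>y. fd y t / \<phi> y t) has_real_derivative
      (fdd z t * \<phi> z t - fd z t * pd z t) / (\<phi> z t * \<phi> z t)) (at z)"
    by (rule DERIV_divide) (use d2 dp pos in \<open>auto simp: less_imp_neq[symmetric]\<close>)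
  hence "dz (ds \<phi> f) z t = (fdd z t * \<phi> z t - fd z t * pd z t) / (\<phi> z t)^2"
    unfolding dz_def fe by (simp add: DERIV_imp_deriv power2_eq_square)
  thus "ds \<phi> (ds \<phi> f) z t = (fdd z t * \<phi> z t - fd z t * pd z t) / (\<phi> z t)^2 / \<phi> z t"
    unfolding ds_def[of \<phi> "ds \<phi> f"] by simp
qed

lemma alg_ratio:
  fixes P Q C F Pa Pb Qa Ca Cb Fa Pt Ct :: real
  assumes pos: "P > 0" "Q > 0" "C > 0" "F > 0"
    and e1: "Pa * C = P * Ca" and e2: "Pb * C \<le> P * Cb" and PC: "C \<le> P" and PQ: "Q \<le> P"
    and Pt: "Pt = (Pb*F - Pa*Fa)/F^2/F + (Pa/F)*((Qa/F)/Q + (Ca/F)/C) - 2*(P^4 - (Q^2-C^2)^2)/(P*Q^2*C^2)"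
    and Ct: "Ct = (Cb*F - Ca*Fa)/F^2/F + (Ca/F)*((Qa/F)/Q + (Pa/F)/P) - 2*(C^4 - (Q^2-P^2)^2)/(C*Q^2*P^2)"
  shows "(Pt*C - P*Ct)/C^2 \<le> 0"
proof -
  define u where "u = Pa / P"
  have Pa: "Pa = u * P" using pos unfolding u_def by simp
  have Ca: "Ca = u * C" using e1 pos unfolding Pa by (simp add: field_simps)
  have key: "Pt/P - Ct/C = (Pb/P - Cb/C)/F^2 - 4*(P^2-C^2)*(P^2+C^2-Q^2)/(Q^2*P^2*C^2)"
  proof -
    have r1: "((Pb*F - Pa*Fa)/F^2/F)/P - ((Cb*F - Ca*Fa)/F^2/F)/C = (Pb/P - Cb/C)/F^2"
      unfolding Pa Ca using pos by (simp add: field_simps)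
    have r2: "((Pa/F)*((Qa/F)/Q + (Ca/F)/C))/P - ((Ca/F)*((Qa/F)/Q + (Pa/F)/P))/C = 0"
      unfolding Pa Ca using pos by (simp add: field_simps)
    have br: "P^4 - C^4 - (Q^2-C^2)^2 + (Q^2-P^2)^2 = 2*(P^2-C^2)*(P^2+C^2-Q^2)"
      by (simp add: algebra_simps power2_eq_square power4_eq_xxxx)
    have r3: "(2*(P^4 - (Q^2-C^2)^2)/(P*Q^2*C^2))/P - (2*(C^4 - (Q^2-P^2)^2)/(C*Q^2*P^2))/C
       = 2*(P^4 - C^4 - (Q^2-C^2)^2 + (Q^2-P^2)^2)/(Q^2*P^2*C^2)"
      using pos by (simp add: field_simps power2_eq_square)
    have "Pt/P - Ct/C = (((Pb*F - Pa*Fa)/F^2/F)/P - ((Cb*F - Ca*Fa)/F^2/F)/C)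
       + (((Pa/F)*((Qa/F)/Q + (Ca/F)/C))/P - ((Ca/F)*((Qa/F)/Q + (Pa/F)/P))/C)
       - ((2*(P^4 - (Q^2-C^2)^2)/(P*Q^2*C^2))/P - (2*(C^4 - (Q^2-P^2)^2)/(C*Q^2*P^2))/C)"
      unfolding Pt Ct by (simp add: diff_divide_distrib add_divide_distrib)
    also have "\<dots> = (Pb/P - Cb/C)/F^2 - 4*(P^2-C^2)*(P^2+C^2-Q^2)/(Q^2*P^2*C^2)"
      unfolding r1 r2 r3 br by simp
    finally show ?thesis .
  qed
  have a1: "Pb/P - Cb/C \<le> 0"
  proof -
    have "Pb/P - Cb/C = (Pb*C - P*Cb)/(P*C)" using pos by (simp add: field_simps)
    also have "\<dots> \<le> 0" using e2 pos by (intro divide_nonpos_pos) auto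
    finally show ?thesis .
  qed
  have a2: "(Pb/P - Cb/C)/F^2 \<le> 0" using a1 pos by (simp add: divide_nonpos_pos)
  have "P^2 - C^2 \<ge> 0" using PC pos by (simp add: power_mono)
  moreover have "P^2 + C^2 - Q^2 \<ge> 0" using PQ pos by (smt (verit) power_mono zero_le_power2)
  ultimately have a3: "4*(P^2-C^2)*(P^2+C^2-Q^2)/(Q^2*P^2*C^2) \<ge> 0" using pos by simp
  have "Pt/P - Ct/C \<le> 0" using key a2 a3 by linarith
  moreover have "(Pt*C - P*Ct)/C^2 = (P/C) * (Pt/P - Ct/C)" using pos by (simp add: field_simps power2_eq_square)
  moreover have "P/C > 0" using pos by simp
  ultimately show ?thesis by (metis mult_nonneg_nonpos less_imp_le)
qed

lemma alg_c:
  fixes A B C F Cb Fa X Ct :: real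
  assumes pos: "A > 0" "B > 0" "C > 0" "F > 0" and AC: "A \<le> C" and BC: "B \<le> C" and Cb: "Cb \<le> 0"
    and Ct: "Ct = (Cb*F - 0*Fa)/F^2/F + (0/F)*X - 2*(C^4 - (A^2-B^2)^2)/(C*A^2*B^2)"
  shows "2*C*Ct \<le> -4"
proof -
  have ineq: "C^4 - (A^2-B^2)^2 \<ge> A^2*B^2"
  proof -
    define x where "x = A^2" define y where "y = B^2" define w where "w = C^2"
    have xy: "0 < x" "0 < y" "x \<le> w" "y \<le> w" unfolding x_def y_def w_def using pos AC BC by (auto simp: power_mono)
    have "C^4 = w^2" unfolding w_def by simp
    moreover have "w^2 \<ge> x^2 + y^2 - x*y"
    proof (cases "x \<le> y")
      case True
      hence "x^2 + y^2 - x*y \<le> y^2" using xy by (simp add: power2_eq_square mult_right_mono)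
      also have "\<dots> \<le> w^2" using xy by (simp add: power_mono)
      finally show ?thesis .
    next
      case False
      hence "x^2 + y^2 - x*y \<le> x^2" using xy by (simp add: power2_eq_square mult_right_mono)
      also have "\<dots> \<le> w^2" using xy by (simp add: power_mono)
      finally show ?thesis .
    qed
    ultimately show ?thesis unfolding x_def y_def by (simp add: power2_eq_square algebra_simps)
  qed
  have "2*C*Ct = 2*C*Cb/F^2 - 4*(C^4 - (A^2-B^2)^2)/(A^2*B^2)"
    unfolding Ct using pos by (simp add: field_simps power2_eq_square)
  also have "\<dots> \<le> 0 - 4"
  proof -
    have "2*C*Cb/F^2 \<le> 0" using Cb pos by (simp add: divide_nonpos_pos mult_nonneg_nonpos)
    moreover have "(C^4 - (A^2-B^2)^2)/(A^2*B^2) \<ge> 1" using ineq pos by (simp add: field_simps)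
    ultimately show ?thesis by linarith
  qed
  finally show ?thesis by simp
qed

lemma ratio_step:
  fixes p q c \<phi> p1 p2 c1 c2 q1 q2 \<phi>1 :: "real \<Rightarrow> real \<Rightarrow> real" and pt ct tau zeta \<epsilon> :: real
  assumes dp1: "\<forall>y. ((\<lambda>y. p y tau) has_real_derivative p1 y tau) (at y)"
    and dp2: "\<forall>y. ((\<lambda>y. p1 y tau) has_real_derivative p2 y tau) (at y)"
    and dc1: "\<forall>y. ((\<lambda>y. c y tau) has_real_derivative c1 y tau) (at y)"
    and dc2: "\<forall>y. ((\<lambda>y. c1 y tau) has_real_derivative c2 y tau) (at y)"
    and dq1: "\<forall>y. ((\<lambda>y. q y tau) has_real_derivative q1 y tau) (at y)"
    and dq2: "\<forall>y. ((\<lambda>y. q1 y tau) has_real_derivative q2 y tau) (at y)"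
    and dphi: "\<forall>y. ((\<lambda>y. \<phi> y tau) has_real_derivative \<phi>1 y tau) (at y)"
    and pos: "\<forall>y. p y tau > 0 \<and> q y tau > 0 \<and> c y tau > 0 \<and> \<phi> y tau > 0"
    and per: "\<forall>y. p (y+2*pi) tau = p y tau \<and> c (y+2*pi) tau = c y tau"
    and dpt: "((\<lambda>s. p zeta s) has_real_derivative pt) (at tau)"
    and dct: "((\<lambda>s. c zeta s) has_real_derivative ct) (at tau)"
    and pde_p: "dt p zeta tau = ds \<phi> (ds \<phi> p) zeta tau
        + ds \<phi> p zeta tau * (ds \<phi> q zeta tau / q zeta tau + ds \<phi> c zeta tau / c zeta tau)
        - 2 * ((p zeta tau)^4 - ((q zeta tau)^2 - (c zeta tau)^2)^2) / (p zeta tau * (q zeta tau)^2 * (c zeta tau)^2)"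
    and pde_c: "dt c zeta tau = ds \<phi> (ds \<phi> c) zeta tau
        + ds \<phi> c zeta tau * (ds \<phi> q zeta tau / q zeta tau + ds \<phi> p zeta tau / p zeta tau)
        - 2 * ((c zeta tau)^4 - ((q zeta tau)^2 - (p zeta tau)^2)^2) / (c zeta tau * (q zeta tau)^2 * (p zeta tau)^2)"
    and zeta: "zeta \<in> {0..2*pi}"
    and mx: "\<forall>y\<in>{0..2*pi}. p y tau / c y tau \<le> p zeta tau / c zeta tau"
    and PQ: "q zeta tau \<le> p zeta tau" and tau: "0 < tau" and eps: "\<epsilon> > 0"
    and before: "\<forall>t\<in>{0..<tau}. p zeta t / c zeta t - 1 - \<epsilon>*(1+t) < 0"
    and at0: "p zeta tau / c zeta tau - 1 - \<epsilon>*(1+tau) \<ge> 0"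
  shows False
proof -
  define P where "P = p zeta tau"
  define C where "C = c zeta tau"
  define N where "N = (\<lambda>y. p1 y tau * c y tau - p y tau * c1 y tau)"
  have Ppos: "P > 0" and Cpos: "C > 0" using pos unfolding P_def C_def by auto
  have "P / C \<ge> 1 + \<epsilon>*(1+tau)" using at0 unfolding P_def C_def by simp
  moreover have "\<epsilon>*(1+tau) > 0" using eps tau by simp
  ultimately have "P / C > 1" by linarith
  hence PC: "C \<le> P" using Cpos by (simp add: field_simps)
  have g1d: "\<forall>z. ((\<lambda>y. p y tau / c y tau) has_real_derivative N z / (c z tau * c z tau)) (at z)"
  proof
    fix z
    show "((\<lambda>y. p y tau / c y tau) has_real_derivative N z / (c z tau * c z tau)) (at z)"
      unfolding N_def by (rule DERIV_divide) (use dp1 dc1 pos in \<open>auto simp: less_imp_neq[symmetric]\<close>)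
  qed
  have dN: "(N has_real_derivative (p1 zeta tau * c1 zeta tau + p2 zeta tau * c zeta tau) - (p zeta tau * c2 zeta tau + p1 zeta tau * c1 zeta tau)) (at zeta)"
    unfolding N_def by (intro DERIV_diff DERIV_mult') (use dp1 dp2 dc1 dc2 in auto)
  have dcc: "((\<lambda>y. c y tau * c y tau) has_real_derivative c zeta tau * c1 zeta tau + c1 zeta tau * c zeta tau) (at zeta)"
    by (intro DERIV_mult') (use dc1 in auto)
  define D where "D = (((p1 zeta tau * c1 zeta tau + p2 zeta tau * c zeta tau) - (p zeta tau * c2 zeta tau + p1 zeta tau * c1 zeta tau)) * (c zeta tau * c zeta tau)
     - N zeta * (c zeta tau * c1 zeta tau + c1 zeta tau * c zeta tau)) / ((c zeta tau * c zeta tau) * (c zeta tau * c zeta tau))"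
  have g2d: "((\<lambda>y. N y / (c y tau * c y tau)) has_real_derivative D) (at zeta)"
    unfolding D_def by (rule DERIV_divide[OF dN dcc]) (use pos in \<open>auto simp: less_imp_neq[symmetric]\<close>)
  have lm: "N zeta / (c zeta tau * c zeta tau) = 0 \<and> D \<le> 0"
    by (rule local_max_ders[where g="\<lambda>y. p y tau / c y tau", OF _ zeta mx g1d g2d]) (use per in simp)
  hence N0: "N zeta = 0" using Cpos unfolding C_def by simp
  hence "D = (p2 zeta tau * c zeta tau - p zeta tau * c2 zeta tau) / (c zeta tau * c zeta tau)"
    unfolding D_def using Cpos unfolding C_def by (simp add: field_simps)
  moreover have cc: "c zeta tau * c zeta tau > 0" using Cpos unfolding C_def by simp
  ultimately have e2: "p2 zeta tau * c zeta tau \<le> p zeta tau * c2 zeta tau" using lm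
    by (simp add: divide_le_0_iff)
  have e1: "p1 zeta tau * c zeta tau = p zeta tau * c1 zeta tau" using N0 unfolding N_def by simp
  have phipos: "\<forall>y. 0 < \<phi> y tau" using pos by blast
  note fp = ds_forms[where f=p and fd=p1 and fdd=p2 and \<phi>=\<phi> and pd=\<phi>1 and t=tau and z=zeta, OF dp1 dp2 dphi phipos]
  note fq = ds_forms[where f=q and fd=q1 and fdd=q2 and \<phi>=\<phi> and pd=\<phi>1 and t=tau and z=zeta, OF dq1 dq2 dphi phipos]
  note fc = ds_forms[where f=c and fd=c1 and fdd=c2 and \<phi>=\<phi> and pd=\<phi>1 and t=tau and z=zeta, OF dc1 dc2 dphi phipos]
  have pt_eq: "dt p zeta tau = pt" unfolding dt_def using DERIV_imp_deriv[OF dpt] .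
  have ct_eq: "dt c zeta tau = ct" unfolding dt_def using DERIV_imp_deriv[OF dct] .
  have Pt: "pt = (p2 zeta tau * \<phi> zeta tau - p1 zeta tau * \<phi>1 zeta tau) / (\<phi> zeta tau)^2 / \<phi> zeta tau
        + (p1 zeta tau / \<phi> zeta tau) * ((q1 zeta tau / \<phi> zeta tau) / q zeta tau + (c1 zeta tau / \<phi> zeta tau) / c zeta tau)
        - 2 * ((p zeta tau)^4 - ((q zeta tau)^2 - (c zeta tau)^2)^2) / (p zeta tau * (q zeta tau)^2 * (c zeta tau)^2)"
    using pde_p unfolding pt_eq fp fq fc .
  have Ct: "ct = (c2 zeta tau * \<phi> zeta tau - c1 zeta tau * \<phi>1 zeta tau) / (\<phi> zeta tau)^2 / \<phi> zeta tau
        + (c1 zeta tau / \<phi> zeta tau) * ((q1 zeta tau / \<phi> zeta tau) / q zeta tau + (p1 zeta tau / \<phi> zeta tau) / p zeta tau)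
        - 2 * ((c zeta tau)^4 - ((q zeta tau)^2 - (p zeta tau)^2)^2) / (c zeta tau * (q zeta tau)^2 * (p zeta tau)^2)"
    using pde_c unfolding ct_eq fp fq fc .
  have ineq: "(pt * C - P * ct) / C^2 \<le> 0" unfolding P_def C_def
    by (rule alg_ratio[where P="p zeta tau" and Q="q zeta tau" and C="c zeta tau" and F="\<phi> zeta tau"
       and Pa="p1 zeta tau" and Pb="p2 zeta tau" and Qa="q1 zeta tau" and Ca="c1 zeta tau" and Cb="c2 zeta tau"
       and Fa="\<phi>1 zeta tau" and Pt=pt and Ct=ct, OF _ _ _ _ e1 e2 PC[unfolded P_def C_def] PQ Pt Ct])
      (use pos in auto)
  have d1: "((\<lambda>s. p zeta s / c zeta s) has_real_derivative (pt * C - P * ct) / (C * C)) (at tau)"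
    unfolding P_def C_def by (rule DERIV_divide[OF dpt dct]) (use pos in \<open>auto simp: less_imp_neq[symmetric]\<close>)
  have d2: "((\<lambda>s. \<epsilon>*(1+s)) has_real_derivative \<epsilon> * (0 + 1)) (at tau)"
    by (intro DERIV_cmult DERIV_add DERIV_const DERIV_ident)
  define l where "l = (pt * C - P * ct) / (C * C) - 0 - \<epsilon> * (0 + 1)"
  have dg: "((\<lambda>s. p zeta s / c zeta s - 1 - \<epsilon>*(1+s)) has_real_derivative l) (at tau)"
    unfolding l_def by (intro DERIV_diff d1 d2 DERIV_const)
  have "l \<ge> 0" by (rule time_ders[OF dg tau at0 before])
  moreover have "l < 0" unfolding l_def using ineq eps by (simp add: power2_eq_square)
  ultimately show False by simp
qed

lemma c_step:
  fixes a b c \<phi> c1 c2 \<phi>1 :: "real \<Rightarrow> real \<Rightarrow> real" and ct tau zeta \<epsilon> K :: real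
  assumes dc1: "\<forall>y. ((\<lambda>y. c y tau) has_real_derivative c1 y tau) (at y)"
    and dc2: "\<forall>y. ((\<lambda>y. c1 y tau) has_real_derivative c2 y tau) (at y)"
    and dphi: "\<forall>y. ((\<lambda>y. \<phi> y tau) has_real_derivative \<phi>1 y tau) (at y)"
    and pos: "\<forall>y. c y tau > 0 \<and> \<phi> y tau > 0" and apos: "a zeta tau > 0" and bpos: "b zeta tau > 0"
    and per: "\<forall>y. c (y+2*pi) tau = c y tau"
    and dct: "((\<lambda>s. c zeta s) has_real_derivative ct) (at tau)"
    and pde_c: "dt c zeta tau = ds \<phi> (ds \<phi> c) zeta tau
        + ds \<phi> c zeta tau * (ds \<phi> a zeta tau / a zeta tau + ds \<phi> b zeta tau / b zeta tau)
        - 2 * ((c zeta tau)^4 - ((a zeta tau)^2 - (b zeta tau)^2)^2) / (c zeta tau * (a zeta tau)^2 * (b zeta tau)^2)"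
    and zeta: "zeta \<in> {0..2*pi}"
    and mx: "\<forall>y\<in>{0..2*pi}. c y tau \<le> c zeta tau"
    and AC: "a zeta tau \<le> c zeta tau" and BC: "b zeta tau \<le> c zeta tau" and tau: "0 < tau" and eps: "\<epsilon> > 0"
    and before: "\<forall>t\<in>{0..<tau}. (c zeta t)^2 - (K - 4*t + \<epsilon>*(1+t)) < 0"
    and at0: "(c zeta tau)^2 - (K - 4*tau + \<epsilon>*(1+tau)) \<ge> 0"
  shows False
proof -
  have lm: "c1 zeta tau = 0 \<and> c2 zeta tau \<le> 0"
    by (rule local_max_ders[where g="\<lambda>y. c y tau" and gd="\<lambda>y. c1 y tau", OF _ zeta mx])
      (use per dc1 dc2 in auto)
  have phipos: "\<forall>y. 0 < \<phi> y tau" using pos by blast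
  note fc = ds_forms[where f=c and fd=c1 and fdd=c2 and \<phi>=\<phi> and pd=\<phi>1 and t=tau and z=zeta, OF dc1 dc2 dphi phipos]
  have ct_eq: "dt c zeta tau = ct" unfolding dt_def using DERIV_imp_deriv[OF dct] .
  have Ct: "ct = (c2 zeta tau * \<phi> zeta tau - 0 * \<phi>1 zeta tau) / (\<phi> zeta tau)^2 / \<phi> zeta tau
        + (0 / \<phi> zeta tau) * (ds \<phi> a zeta tau / a zeta tau + ds \<phi> b zeta tau / b zeta tau)
        - 2 * ((c zeta tau)^4 - ((a zeta tau)^2 - (b zeta tau)^2)^2) / (c zeta tau * (a zeta tau)^2 * (b zeta tau)^2)"
    using pde_c unfolding ct_eq fc lm[THEN conjunct1] .
  have ineq: "2 * c zeta tau * ct \<le> -4"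
    by (rule alg_c[OF apos bpos _ _ AC BC lm[THEN conjunct2] Ct]) (use pos in auto)
  have fe: "(\<lambda>x. (c zeta x)^2 - (K - 4*x + \<epsilon>*(1+x))) = (\<lambda>x. c zeta x * c zeta x - (K - 4*x + \<epsilon>*(1+x)))"
    by (simp add: power2_eq_square)
  have d1: "((\<lambda>x. c zeta x * c zeta x) has_real_derivative c zeta tau * ct + ct * c zeta tau) (at tau)"
    by (rule DERIV_mult'[OF dct dct])
  have d2: "((\<lambda>x. K - 4*x + \<epsilon>*(1+x)) has_real_derivative 0 - 4 * 1 + \<epsilon> * (0 + 1)) (at tau)"
    by (intro DERIV_cmult DERIV_add DERIV_diff DERIV_const DERIV_ident)
  define l where "l = c zeta tau * ct + ct * c zeta tau - (0 - 4 * 1 + \<epsilon> * (0 + 1))"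
  have dg: "((\<lambda>x. (c zeta x)^2 - (K - 4*x + \<epsilon>*(1+x))) has_real_derivative l) (at tau)"
    unfolding l_def fe by (intro DERIV_diff d1 d2)
  have "l \<ge> 0" by (rule time_ders[OF dg tau at0 before])
  moreover have "l < 0" unfolding l_def using ineq eps by simp
  ultimately show False by simp
qed

lemma chat_max:
  assumes "continuous_on {0..2*pi} (\<lambda>z. c z t)"
  shows "\<exists>zm\<in>{0..2*pi}. chat c t = c zm t \<and> (\<forall>z\<in>{0..2*pi}. c z t \<le> c zm t)"
proof -
  obtain zm where zm: "zm \<in> {0..2*pi}" "\<forall>z\<in>{0..2*pi}. c z t \<le> c zm t"
    using continuous_attains_sup[OF compact_Icc _ assms] by auto
  have "chat c t = c zm t" unfolding chat_def
    by (rule cSup_eq_maximum) (use zm in auto)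
  thus ?thesis using zm by blast
qed

lemma eps_lim:
  fixes x y k :: real
  assumes "\<forall>\<epsilon>>0. x < y + \<epsilon>*k" "k > 0"
  shows "x \<le> y"
proof (rule ccontr)
  assume "\<not> x \<le> y"
  hence "(x-y)/k > 0" using assms(2) by simp
  hence "x < y + ((x-y)/k)*k" using assms(1) by blast
  thus False using assms(2) by simp
qed

lemma split_fun: "(\<lambda>(z,t). f z t) = (\<lambda>p. f (fst p) (snd p))"
  by (simp add: fun_eq_iff split_beta)

theorem lemma4p3:
  fixes T :: real and \<phi> a b c :: "real \<Rightarrow> real \<Rightarrow> real"
  assumes "bianchi_rf T \<phi> a b c"
    and "\<forall>z. a z 0 \<le> b z 0 \<and> b z 0 \<le> c z 0"
  shows "\<forall>t\<in>{0..<T}. (chat c t)^2 \<le> -4*t + (chat c 0)^2"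
proof -
  note init = assms(2)
  have T0: "0 < T" and sp: "smooth_zt T \<phi>" and sa: "smooth_zt T a" and sb: "smooth_zt T b"
    and sc: "smooth_zt T c"
    and pos: "\<forall>z. \<forall>t\<in>{0..<T}. 0 < \<phi> z t \<and> 0 < a z t \<and> 0 < b z t \<and> 0 < c z t"
    and per: "\<forall>z. \<forall>t\<in>{0..<T}. \<phi> (z + 2*pi) t = \<phi> z t \<and> a (z + 2*pi) t = a z t \<and>
                        b (z + 2*pi) t = b z t \<and> c (z + 2*pi) t = c z t"
    and pde: "\<forall>z. \<forall>t\<in>{0<..<T}.
        dt \<phi> z t = \<phi> z t * (ds \<phi> (ds \<phi> a) z t / a z t + ds \<phi> (ds \<phi> b) z t / b z t
                               + ds \<phi> (ds \<phi> c) z t / c z t) \<and>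
        dt a z t = ds \<phi> (ds \<phi> a) z t
                   + ds \<phi> a z t * (ds \<phi> b z t / b z t + ds \<phi> c z t / c z t)
                   - 2 * ((a z t)^4 - ((b z t)^2 - (c z t)^2)^2) / (a z t * (b z t)^2 * (c z t)^2) \<and>
        dt b z t = ds \<phi> (ds \<phi> b) z t
                   + ds \<phi> b z t * (ds \<phi> a z t / a z t + ds \<phi> c z t / c z t)
                   - 2 * ((b z t)^4 - ((a z t)^2 - (c z t)^2)^2) / (b z t * (a z t)^2 * (c z t)^2) \<and>
        dt c z t = ds \<phi> (ds \<phi> c) z t
                   + ds \<phi> c z t * (ds \<phi> a z t / a z t + ds \<phi> b z t / b z t)
                   - 2 * ((c z t)^4 - ((a z t)^2 - (b z t)^2)^2) / (c z t * (a z t)^2 * (b z t)^2)"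
    using assms(1) unfolding bianchi_rf_def by blast+
  obtain pz pzz ptt where P: "continuous_on (UNIV \<times> {0..<T}) (\<lambda>(z,t). \<phi> z t)"
    "\<forall>z. \<forall>t\<in>{0..<T}. ((\<lambda>y. \<phi> y t) has_real_derivative pz z t) (at z)"
    "\<forall>z. \<forall>t\<in>{0..<T}. ((\<lambda>y. pz y t) has_real_derivative pzz z t) (at z)"
    "\<forall>z. \<forall>t\<in>{0..<T}. ((\<lambda>s. \<phi> z s) has_real_derivative ptt z t) (at t within {0..<T})"
    using smooth_ders[OF sp] by blast
  obtain az azz att where A: "continuous_on (UNIV \<times> {0..<T}) (\<lambda>(z,t). a z t)"
    "\<forall>z. \<forall>t\<in>{0..<T}. ((\<lambda>y. a y t) has_real_derivative az z t) (at z)"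
    "\<forall>z. \<forall>t\<in>{0..<T}. ((\<lambda>y. az y t) has_real_derivative azz z t) (at z)"
    "\<forall>z. \<forall>t\<in>{0..<T}. ((\<lambda>s. a z s) has_real_derivative att z t) (at t within {0..<T})"
    using smooth_ders[OF sa] by blast
  obtain bz bzz btt where B: "continuous_on (UNIV \<times> {0..<T}) (\<lambda>(z,t). b z t)"
    "\<forall>z. \<forall>t\<in>{0..<T}. ((\<lambda>y. b y t) has_real_derivative bz z t) (at z)"
    "\<forall>z. \<forall>t\<in>{0..<T}. ((\<lambda>y. bz y t) has_real_derivative bzz z t) (at z)"
    "\<forall>z. \<forall>t\<in>{0..<T}. ((\<lambda>s. b z s) has_real_derivative btt z t) (at t within {0..<T})"
    using smooth_ders[OF sb] by blast
  obtain cz czz ctt where CC: "continuous_on (UNIV \<times> {0..<T}) (\<lambda>(z,t). c z t)"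
    "\<forall>z. \<forall>t\<in>{0..<T}. ((\<lambda>y. c y t) has_real_derivative cz z t) (at z)"
    "\<forall>z. \<forall>t\<in>{0..<T}. ((\<lambda>y. cz y t) has_real_derivative czz z t) (at z)"
    "\<forall>z. \<forall>t\<in>{0..<T}. ((\<lambda>s. c z s) has_real_derivative ctt z t) (at t within {0..<T})"
    using smooth_ders[OF sc] by blast
  have ca: "continuous_on (UNIV \<times> {0..<T}) (\<lambda>p. a (fst p) (snd p))" using A(1) unfolding split_fun .
  have cb: "continuous_on (UNIV \<times> {0..<T}) (\<lambda>p. b (fst p) (snd p))" using B(1) unfolding split_fun .
  have cc: "continuous_on (UNIV \<times> {0..<T}) (\<lambda>p. c (fst p) (snd p))" using CC(1) unfolding split_fun .
  have cnz: "\<forall>p\<in>UNIV \<times> {0..<T}. c (fst p) (snd p) \<noteq> 0"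
  proof
    fix p :: "real \<times> real" assume "p \<in> UNIV \<times> {0..<T}"
    hence "snd p \<in> {0..<T}" by (simp add: mem_Times_iff)
    thus "c (fst p) (snd p) \<noteq> 0" using pos by (metis less_irrefl)
  qed

  have step1: "\<forall>t\<in>{0..<T}. \<forall>z\<in>{0..2*pi}. b z t \<le> c z t \<and> a z t \<le> c z t"
  proof -
    have key: "\<forall>t\<in>{0..<T}. \<forall>z\<in>{0..2*pi}. max (b z t / c z t) (a z t / c z t) < 1 + \<epsilon>*(1+t)"
      if eps: "\<epsilon> > 0" for \<epsilon>
    proof (rule ccontr)
      assume "\<not> ?thesis"
      then obtain t1 z1 where t1: "t1 \<in> {0..<T}" and z1: "z1 \<in> {0..2*pi}"
        and h1: "max (b z1 t1 / c z1 t1) (a z1 t1 / c z1 t1) \<ge> 1 + \<epsilon>*(1+t1)" by force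
      define h where "h = (\<lambda>z t. max (b z t / c z t) (a z t / c z t) - 1 - \<epsilon>*(1+t))"
      have conth: "continuous_on (UNIV \<times> {0..<T}) (\<lambda>(z,t). h z t)"
        unfolding split_fun h_def
        by (intro continuous_intros ca cb cc) (use cnz in auto)
      have h0: "\<forall>z\<in>{0..2*pi}. h z 0 < 0"
      proof
        fix z assume "z \<in> {0..2*pi}"
        have c0: "c z 0 > 0" using pos T0 by force
        have "b z 0 / c z 0 \<le> 1" "a z 0 / c z 0 \<le> 1" using init c0
          by (auto simp: divide_le_eq_1) (meson order_trans)
        thus "h z 0 < 0" unfolding h_def using eps by simp
      qed
      obtain t0 z0 where t0: "0 < t0" "t0 < T" and z0: "z0 \<in> {0..2*pi}" and ht0: "h z0 t0 \<ge> 0"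
        and mxh: "\<forall>z\<in>{0..2*pi}. h z t0 \<le> h z0 t0"
        and bef: "\<forall>t\<in>{0..<t0}. \<forall>z\<in>{0..2*pi}. h z t < 0"
        using first_time[OF conth h0 z1 t1] h1 unfolding h_def by force
      have t0T: "t0 \<in> {0..<T}" and t0T': "t0 \<in> {0<..<T}" using t0 by auto
      have posy: "\<forall>y. 0 < \<phi> y t0 \<and> 0 < a y t0 \<and> 0 < b y t0 \<and> 0 < c y t0" using pos t0T by blast
      have pery: "\<forall>y. a (y+2*pi) t0 = a y t0 \<and> b (y+2*pi) t0 = b y t0 \<and> c (y+2*pi) t0 = c y t0"
        using per t0T by blast
      have pdez: "dt a z0 t0 = ds \<phi> (ds \<phi> a) z0 t0
                   + ds \<phi> a z0 t0 * (ds \<phi> b z0 t0 / b z0 t0 + ds \<phi> c z0 t0 / c z0 t0)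
                   - 2 * ((a z0 t0)^4 - ((b z0 t0)^2 - (c z0 t0)^2)^2) / (a z0 t0 * (b z0 t0)^2 * (c z0 t0)^2)"
        "dt b z0 t0 = ds \<phi> (ds \<phi> b) z0 t0
                   + ds \<phi> b z0 t0 * (ds \<phi> a z0 t0 / a z0 t0 + ds \<phi> c z0 t0 / c z0 t0)
                   - 2 * ((b z0 t0)^4 - ((a z0 t0)^2 - (c z0 t0)^2)^2) / (b z0 t0 * (a z0 t0)^2 * (c z0 t0)^2)"
        "dt c z0 t0 = ds \<phi> (ds \<phi> c) z0 t0
                   + ds \<phi> c z0 t0 * (ds \<phi> a z0 t0 / a z0 t0 + ds \<phi> b z0 t0 / b z0 t0)
                   - 2 * ((c z0 t0)^4 - ((a z0 t0)^2 - (b z0 t0)^2)^2) / (c z0 t0 * (a z0 t0)^2 * (b z0 t0)^2)"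
        using pde t0T' by blast+
      have dat: "((\<lambda>s. a z0 s) has_real_derivative att z0 t0) (at t0)"
        using dt_at[OF A(4)[rule_format, OF t0T] t0] .
      have dbt: "((\<lambda>s. b z0 s) has_real_derivative btt z0 t0) (at t0)"
        using dt_at[OF B(4)[rule_format, OF t0T] t0] .
      have dct: "((\<lambda>s. c z0 s) has_real_derivative ctt z0 t0) (at t0)"
        using dt_at[OF CC(4)[rule_format, OF t0T] t0] .
      have cz0: "c z0 t0 > 0" using posy by blast
      show False
      proof (cases "a z0 t0 / c z0 t0 \<le> b z0 t0 / c z0 t0")
        case True
        show False
        proof (rule ratio_step[where p=b and q=a and c=c and \<phi>=\<phi> and tau=t0 and zeta=z0 and \<epsilon>=\<epsilon>])
          show "\<forall>y. ((\<lambda>y. b y t0) has_real_derivative bz y t0) (at y)" using B(2) t0T by blast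
          show "\<forall>y. ((\<lambda>y. bz y t0) has_real_derivative bzz y t0) (at y)" using B(3) t0T by blast
          show "\<forall>y. ((\<lambda>y. c y t0) has_real_derivative cz y t0) (at y)" using CC(2) t0T by blast
          show "\<forall>y. ((\<lambda>y. cz y t0) has_real_derivative czz y t0) (at y)" using CC(3) t0T by blast
          show "\<forall>y. ((\<lambda>y. a y t0) has_real_derivative az y t0) (at y)" using A(2) t0T by blast
          show "\<forall>y. ((\<lambda>y. az y t0) has_real_derivative azz y t0) (at y)" using A(3) t0T by blast
          show "\<forall>y. ((\<lambda>y. \<phi> y t0) has_real_derivative pz y t0) (at y)" using P(2) t0T by blast
          show "\<forall>y. b y t0 > 0 \<and> a y t0 > 0 \<and> c y t0 > 0 \<and> \<phi> y t0 > 0" using posy by blast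
          show "\<forall>y. b (y+2*pi) t0 = b y t0 \<and> c (y+2*pi) t0 = c y t0" using pery by blast
          show "((\<lambda>s. b z0 s) has_real_derivative btt z0 t0) (at t0)" by (rule dbt)
          show "((\<lambda>s. c z0 s) has_real_derivative ctt z0 t0) (at t0)" by (rule dct)
          show "dt b z0 t0 = ds \<phi> (ds \<phi> b) z0 t0
              + ds \<phi> b z0 t0 * (ds \<phi> a z0 t0 / a z0 t0 + ds \<phi> c z0 t0 / c z0 t0)
              - 2 * ((b z0 t0)^4 - ((a z0 t0)^2 - (c z0 t0)^2)^2) / (b z0 t0 * (a z0 t0)^2 * (c z0 t0)^2)"
            by (rule pdez(2))
          show "dt c z0 t0 = ds \<phi> (ds \<phi> c) z0 t0
              + ds \<phi> c z0 t0 * (ds \<phi> a z0 t0 / a z0 t0 + ds \<phi> b z0 t0 / b z0 t0)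
              - 2 * ((c z0 t0)^4 - ((a z0 t0)^2 - (b z0 t0)^2)^2) / (c z0 t0 * (a z0 t0)^2 * (b z0 t0)^2)"
            by (rule pdez(3))
          show "z0 \<in> {0..2*pi}" by (rule z0)
          show "\<forall>y\<in>{0..2*pi}. b y t0 / c y t0 \<le> b z0 t0 / c z0 t0"
          proof
            fix y assume y: "y \<in> {0..2*pi}"
            have "h y t0 \<le> h z0 t0" using mxh y by blast
            thus "b y t0 / c y t0 \<le> b z0 t0 / c z0 t0" unfolding h_def using True by simp
          qed
          show "a z0 t0 \<le> b z0 t0" using True cz0 by (simp add: divide_right_mono_neg divide_le_cancel)
          show "0 < t0" by (rule t0)
          show "\<epsilon> > 0" by (rule eps)
          show "\<forall>t\<in>{0..<t0}. b z0 t / c z0 t - 1 - \<epsilon>*(1+t) < 0"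
          proof
            fix t assume "t \<in> {0..<t0}"
            hence "h z0 t < 0" using bef z0 by blast
            thus "b z0 t / c z0 t - 1 - \<epsilon>*(1+t) < 0" unfolding h_def by simp
          qed
          show "b z0 t0 / c z0 t0 - 1 - \<epsilon>*(1+t0) \<ge> 0" using ht0 True unfolding h_def by simp
        qed
      next
        case False
        have pdec: "dt c z0 t0 = ds \<phi> (ds \<phi> c) z0 t0
              + ds \<phi> c z0 t0 * (ds \<phi> b z0 t0 / b z0 t0 + ds \<phi> a z0 t0 / a z0 t0)
              - 2 * ((c z0 t0)^4 - ((b z0 t0)^2 - (a z0 t0)^2)^2) / (c z0 t0 * (b z0 t0)^2 * (a z0 t0)^2)"
        proof -
          have sq: "((a z0 t0)^2 - (b z0 t0)^2)^2 = ((b z0 t0)^2 - (a z0 t0)^2)^2" by (rule power2_commute)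
          have pr: "c z0 t0 * (a z0 t0)^2 * (b z0 t0)^2 = c z0 t0 * (b z0 t0)^2 * (a z0 t0)^2" by simp
          have sm: "ds \<phi> a z0 t0 / a z0 t0 + ds \<phi> b z0 t0 / b z0 t0 = ds \<phi> b z0 t0 / b z0 t0 + ds \<phi> a z0 t0 / a z0 t0"
            by simp
          show ?thesis using pdez(3) unfolding sq pr sm .
        qed
        show False
        proof (rule ratio_step[where p=a and q=b and c=c and \<phi>=\<phi> and tau=t0 and zeta=z0 and \<epsilon>=\<epsilon>])
          show "\<forall>y. ((\<lambda>y. a y t0) has_real_derivative az y t0) (at y)" using A(2) t0T by blast
          show "\<forall>y. ((\<lambda>y. az y t0) has_real_derivative azz y t0) (at y)" using A(3) t0T by blast
          show "\<forall>y. ((\<lambda>y. c y t0) has_real_derivative cz y t0) (at y)" using CC(2) t0T by blast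
          show "\<forall>y. ((\<lambda>y. cz y t0) has_real_derivative czz y t0) (at y)" using CC(3) t0T by blast
          show "\<forall>y. ((\<lambda>y. b y t0) has_real_derivative bz y t0) (at y)" using B(2) t0T by blast
          show "\<forall>y. ((\<lambda>y. bz y t0) has_real_derivative bzz y t0) (at y)" using B(3) t0T by blast
          show "\<forall>y. ((\<lambda>y. \<phi> y t0) has_real_derivative pz y t0) (at y)" using P(2) t0T by blast
          show "\<forall>y. a y t0 > 0 \<and> b y t0 > 0 \<and> c y t0 > 0 \<and> \<phi> y t0 > 0" using posy by blast
          show "\<forall>y. a (y+2*pi) t0 = a y t0 \<and> c (y+2*pi) t0 = c y t0" using pery by blast
          show "((\<lambda>s. a z0 s) has_real_derivative att z0 t0) (at t0)" by (rule dat)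
          show "((\<lambda>s. c z0 s) has_real_derivative ctt z0 t0) (at t0)" by (rule dct)
          show "dt a z0 t0 = ds \<phi> (ds \<phi> a) z0 t0
              + ds \<phi> a z0 t0 * (ds \<phi> b z0 t0 / b z0 t0 + ds \<phi> c z0 t0 / c z0 t0)
              - 2 * ((a z0 t0)^4 - ((b z0 t0)^2 - (c z0 t0)^2)^2) / (a z0 t0 * (b z0 t0)^2 * (c z0 t0)^2)"
            by (rule pdez(1))
          show "dt c z0 t0 = ds \<phi> (ds \<phi> c) z0 t0
              + ds \<phi> c z0 t0 * (ds \<phi> b z0 t0 / b z0 t0 + ds \<phi> a z0 t0 / a z0 t0)
              - 2 * ((c z0 t0)^4 - ((b z0 t0)^2 - (a z0 t0)^2)^2) / (c z0 t0 * (b z0 t0)^2 * (a z0 t0)^2)"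
            by (rule pdec)
          show "z0 \<in> {0..2*pi}" by (rule z0)
          show "\<forall>y\<in>{0..2*pi}. a y t0 / c y t0 \<le> a z0 t0 / c z0 t0"
          proof
            fix y assume y: "y \<in> {0..2*pi}"
            have "h y t0 \<le> h z0 t0" using mxh y by blast
            thus "a y t0 / c y t0 \<le> a z0 t0 / c z0 t0" unfolding h_def using False by simp
          qed
          show "b z0 t0 \<le> a z0 t0" using False cz0 by (simp add: divide_le_cancel)
          show "0 < t0" by (rule t0)
          show "\<epsilon> > 0" by (rule eps)
          show "\<forall>t\<in>{0..<t0}. a z0 t / c z0 t - 1 - \<epsilon>*(1+t) < 0"
          proof
            fix t assume "t \<in> {0..<t0}"
            hence "h z0 t < 0" using bef z0 by blast
            thus "a z0 t / c z0 t - 1 - \<epsilon>*(1+t) < 0" unfolding h_def by simp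
          qed
          show "a z0 t0 / c z0 t0 - 1 - \<epsilon>*(1+t0) \<ge> 0" using ht0 False unfolding h_def by simp
        qed
      qed
    qed
    show ?thesis
    proof (intro ballI)
      fix t z assume t: "t \<in> {0..<T}" and z: "z \<in> {0..2*pi}"
      have "max (b z t / c z t) (a z t / c z t) \<le> 1"
        by (rule eps_lim[where k="1+t"]) (use key t z in auto)
      moreover have "c z t > 0" using pos t by blast
      ultimately show "b z t \<le> c z t \<and> a z t \<le> c z t" by (simp add: divide_le_eq_1)
    qed
  qed
  have slc: "continuous_on {0..2*pi} (\<lambda>z. c z t)" if "t \<in> {0..<T}" for t
    by (rule slice_cont[OF CC(1) that])
  obtain zc where zc: "zc \<in> {0..2*pi}" "chat c 0 = c zc 0" "\<forall>z\<in>{0..2*pi}. c z 0 \<le> c zc 0"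
    using chat_max[where c=c and t=0, OF slc[of 0]] T0 by auto
  define K where "K = (chat c 0)^2"
  have key2: "\<forall>t\<in>{0..<T}. \<forall>z\<in>{0..2*pi}. (c z t)^2 < K - 4*t + \<epsilon>*(1+t)"
    if eps: "\<epsilon> > 0" for \<epsilon>
  proof (rule ccontr)
    assume "\<not> ?thesis"
    then obtain t1 z1 where t1: "t1 \<in> {0..<T}" and z1: "z1 \<in> {0..2*pi}"
      and h1: "(c z1 t1)^2 \<ge> K - 4*t1 + \<epsilon>*(1+t1)" by force
    define h where "h = (\<lambda>z t. (c z t)^2 - (K - 4*t + \<epsilon>*(1+t)))"
    have conth: "continuous_on (UNIV \<times> {0..<T}) (\<lambda>(z,t). h z t)"
      unfolding split_fun h_def by (intro continuous_intros cc)
    have h0: "\<forall>z\<in>{0..2*pi}. h z 0 < 0"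
    proof
      fix z assume z: "z \<in> {0..2*pi}"
      have c0: "c z 0 > 0" using pos T0 by force
      have "c z 0 \<le> chat c 0" using zc z by simp
      hence "(c z 0)^2 \<le> K" unfolding K_def using c0 by (simp add: power_mono)
      thus "h z 0 < 0" unfolding h_def using eps by simp
    qed
    obtain t0 z0 where t0: "0 < t0" "t0 < T" and z0: "z0 \<in> {0..2*pi}" and ht0: "h z0 t0 \<ge> 0"
      and mxh: "\<forall>z\<in>{0..2*pi}. h z t0 \<le> h z0 t0"
      and bef: "\<forall>t\<in>{0..<t0}. \<forall>z\<in>{0..2*pi}. h z t < 0"
      using first_time[OF conth h0 z1 t1] h1 unfolding h_def by force
    have t0T: "t0 \<in> {0..<T}" and t0T': "t0 \<in> {0<..<T}" using t0 by auto
    have posy: "\<forall>y. 0 < \<phi> y t0 \<and> 0 < a y t0 \<and> 0 < b y t0 \<and> 0 < c y t0" using pos t0T by blast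
    have pery: "\<forall>y. c (y+2*pi) t0 = c y t0" using per t0T by blast
    have pdec: "dt c z0 t0 = ds \<phi> (ds \<phi> c) z0 t0
                   + ds \<phi> c z0 t0 * (ds \<phi> a z0 t0 / a z0 t0 + ds \<phi> b z0 t0 / b z0 t0)
                   - 2 * ((c z0 t0)^4 - ((a z0 t0)^2 - (b z0 t0)^2)^2) / (c z0 t0 * (a z0 t0)^2 * (b z0 t0)^2)"
      using pde t0T' by blast
    have dct: "((\<lambda>s. c z0 s) has_real_derivative ctt z0 t0) (at t0)"
      using dt_at[OF CC(4)[rule_format, OF t0T] t0] .
    show False
    proof (rule c_step[where a=a and b=b and c=c and \<phi>=\<phi> and tau=t0 and zeta=z0 and \<epsilon>=\<epsilon> and K=K])
      show "\<forall>y. ((\<lambda>y. c y t0) has_real_derivative cz y t0) (at y)" using CC(2) t0T by blast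
      show "\<forall>y. ((\<lambda>y. cz y t0) has_real_derivative czz y t0) (at y)" using CC(3) t0T by blast
      show "\<forall>y. ((\<lambda>y. \<phi> y t0) has_real_derivative pz y t0) (at y)" using P(2) t0T by blast
      show "\<forall>y. c y t0 > 0 \<and> \<phi> y t0 > 0" using posy by blast
      show "a z0 t0 > 0" "b z0 t0 > 0" using posy by blast+
      show "\<forall>y. c (y+2*pi) t0 = c y t0" by (rule pery)
      show "((\<lambda>s. c z0 s) has_real_derivative ctt z0 t0) (at t0)" by (rule dct)
      show "dt c z0 t0 = ds \<phi> (ds \<phi> c) z0 t0
              + ds \<phi> c z0 t0 * (ds \<phi> a z0 t0 / a z0 t0 + ds \<phi> b z0 t0 / b z0 t0)
              - 2 * ((c z0 t0)^4 - ((a z0 t0)^2 - (b z0 t0)^2)^2) / (c z0 t0 * (a z0 t0)^2 * (b z0 t0)^2)"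
        by (rule pdec)
      show "z0 \<in> {0..2*pi}" by (rule z0)
      show "\<forall>y\<in>{0..2*pi}. c y t0 \<le> c z0 t0"
      proof
        fix y assume y: "y \<in> {0..2*pi}"
        have "h y t0 \<le> h z0 t0" using mxh y by blast
        hence "(c y t0)^2 \<le> (c z0 t0)^2" unfolding h_def by simp
        thus "c y t0 \<le> c z0 t0" using posy by (meson less_imp_le power2_le_imp_le)
      qed
      show "a z0 t0 \<le> c z0 t0" "b z0 t0 \<le> c z0 t0" using step1 t0T z0 by blast+
      show "0 < t0" by (rule t0)
      show "\<epsilon> > 0" by (rule eps)
      show "\<forall>t\<in>{0..<t0}. (c z0 t)^2 - (K - 4*t + \<epsilon>*(1+t)) < 0"
        using bef z0 unfolding h_def by blast
      show "(c z0 t0)^2 - (K - 4*t0 + \<epsilon>*(1+t0)) \<ge> 0" using ht0 unfolding h_def by simp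
    qed
  qed
  show ?thesis
  proof
    fix t assume t: "t \<in> {0..<T}"
    obtain zm where zm: "zm \<in> {0..2*pi}" "chat c t = c zm t"
      using chat_max[where c=c and t=t, OF slc[OF t]] by auto
    have "(c zm t)^2 \<le> K - 4*t"
      by (rule eps_lim[where k="1+t"]) (use key2 t zm in auto)
    thus "(chat c t)^2 \<le> -4*t + (chat c 0)^2" using zm unfolding K_def by simp
  qed
qed

end
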